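(* $\mathcal{RD}_{\text{EGC*}}=\mathcal{RD}_{\text{EGC}}$.
   Context: Let $\mathcal{X}$ and $\hat{\mathcal{X}}$ be finite sets, $p_X$ a distribution on $\mathcal{X}$, $X$ a random variable with distribution $p_X$, and $d:\mathcal{X}\times\hat{\mathcal{X}}\to[0,\infty)$ a distortion measure. All auxiliary random variables below take values in finite sets. The EGC* region $\mathcal{RD}_{\text{EGC*}}$ is the convex closure of the set of quintuples $(R_1,R_2,D_{\{1\}},D_{\{2\}},D_{\{1,2\}})$ for which there exist auxiliary random variables $X_{\{1\}}$ and $X_{\{2\}}$, jointly distributed with $X$, and functions $\phi_{\{1\}},\phi_{\{2\}},\phi_{\{1,2\}}$ with values in $\hat{\mathcal{X}}$, such that $R_k\ge I(X;X_{\{k\}})$ for $k\in\{1,2\}$; $R_1+R_2\ge I(X;X_{\{1\}},X_{\{2\}})+I(X_{\{1\}};X_{\{2\}})$; $D_{\{k\}}\ge \mathbb{E}[d(X,\phi_{\{k\}}(X_{\{k\}}))]$ for $k\in\{1,2\}$; $D_{\{1,2\}}\ge\mathbb{E}[d(X,\phi_{\{1,2\}}(X_{\{1\}},X_{\{2\}}))]$. The EGC region $\mathcal{RD}_{\text{EGC}}$ is the convex closure of the set of quintuples $(R_1,R_2,D_{\{1\}},D_{\{2\}},D_{\{1,2\}})$ for which there exist random variables $X_{\{1\}},X_{\{2\}},X_{\{1,2\}}$ taking values in $\hat{\mathcal{X}}$, jointly distributed with $X$, such that $R_k\ge I(X;X_{\{k\}})$ for $k\in\{1,2\}$; $R_1+R_2\ge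 I(X;X_{\{1\}},X_{\{2\}},X_{\{1,2\}})+I(X_{\{1\}};X_{\{2\}})$; $D_{\mathcal{K}}\ge\mathbb{E}[d(X,X_{\mathcal{K}})]$ for $\mathcal{K}\in\{\{1\},\{2\},\{1,2\}\}$. *)

theory Defs
  imports "HOL-Probability.Probability"
begin

definition mutual_info :: "('a \<times> 'b) pmf \<Rightarrow> real" where
  "mutual_info P =
     (\<Sum>ab\<in>set_pmf P. pmf P ab *
        log 2 (pmf P ab / (pmf (map_pmf fst P) (fst ab) * pmf (map_pmf snd P) (snd ab))))"

type_synonym quint = "real \<times> real \<times> real \<times> real \<times> real"

definition convex_closure :: "quint set \<Rightarrow> quint set" where
  "convex_closure S = closure (convex hull S)"

text \<open>EGC* region. Auxiliary variables X_1, X_2 take values in finite subsets of nat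
(every finite alphabet embeds in nat); the joint law of (X, X_1, X_2) is P.\<close>
definition RD_EGCstar_pre :: "'x pmf \<Rightarrow> ('x \<Rightarrow> 'y \<Rightarrow> real) \<Rightarrow> quint set" where
  "RD_EGCstar_pre pX d =
    {(R1, R2, D1, D2, D12). \<exists>(P :: ('x \<times> nat \<times> nat) pmf) (\<phi>1 :: nat \<Rightarrow> 'y) (\<phi>2 :: nat \<Rightarrow> 'y)
        (\<phi>12 :: nat \<Rightarrow> nat \<Rightarrow> 'y).
       finite (set_pmf P) \<and> map_pmf fst P = pX \<and>
       R1 \<ge> mutual_info (map_pmf (\<lambda>(x,u,v). (x,u)) P) \<and>
       R2 \<ge> mutual_info (map_pmf (\<lambda>(x,u,v). (x,v)) P) \<and>
       R1 + R2 \<ge> mutual_info (map_pmf (\<lambda>(x,u,v). (x,(u,v))) P)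
                 + mutual_info (map_pmf (\<lambda>(x,u,v). (u,v)) P) \<and>
       D1 \<ge> measure_pmf.expectation P (\<lambda>(x,u,v). d x (\<phi>1 u)) \<and>
       D2 \<ge> measure_pmf.expectation P (\<lambda>(x,u,v). d x (\<phi>2 v)) \<and>
       D12 \<ge> measure_pmf.expectation P (\<lambda>(x,u,v). d x (\<phi>12 u v))}"

definition RD_EGCstar :: "'x pmf \<Rightarrow> ('x \<Rightarrow> 'y \<Rightarrow> real) \<Rightarrow> quint set" where
  "RD_EGCstar pX d = convex_closure (RD_EGCstar_pre pX d)"

text \<open>EGC region: X_{1}, X_{2}, X_{12} take values in the reconstruction alphabet 'y.\<close>
definition RD_EGC_pre :: "'x pmf \<Rightarrow> ('x \<Rightarrow> 'y \<Rightarrow> real) \<Rightarrow> quint set" where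
  "RD_EGC_pre pX d =
    {(R1, R2, D1, D2, D12). \<exists>(P :: ('x \<times> 'y \<times> 'y \<times> 'y) pmf).
       map_pmf fst P = pX \<and>
       R1 \<ge> mutual_info (map_pmf (\<lambda>(x,a,b,c). (x,a)) P) \<and>
       R2 \<ge> mutual_info (map_pmf (\<lambda>(x,a,b,c). (x,b)) P) \<and>
       R1 + R2 \<ge> mutual_info (map_pmf (\<lambda>(x,a,b,c). (x,(a,b,c))) P)
                 + mutual_info (map_pmf (\<lambda>(x,a,b,c). (a,b)) P) \<and>
       D1 \<ge> measure_pmf.expectation P (\<lambda>(x,a,b,c). d x a) \<and>
       D2 \<ge> measure_pmf.expectation P (\<lambda>(x,a,b,c). d x b) \<and>
       D12 \<ge> measure_pmf.expectation P (\<lambda>(x,a,b,c). d x c)}"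

definition RD_EGC :: "'x pmf \<Rightarrow> ('x \<Rightarrow> 'y \<Rightarrow> real) \<Rightarrow> quint set" where
  "RD_EGC pX d = convex_closure (RD_EGC_pre pX d)"

end

theory Submission
  imports Defs
begin


definition ent :: "'a pmf \<Rightarrow> real" where
  "ent p = - (\<Sum>x\<in>set_pmf p. pmf p x * log 2 (pmf p x))"

lemma expect_sum:
  assumes "finite (set_pmf p)"
  shows "measure_pmf.expectation p f = (\<Sum>x\<in>set_pmf p. pmf p x * f x)"
  using assms by (subst integral_measure_pmf_real[where A="set_pmf p"]) (auto simp: mult.commute)

lemma sum_map:
  assumes "finite (set_pmf P)"
  shows "(\<Sum>z\<in>set_pmf P. pmf P z * h (f z)) = (\<Sum>y\<in>set_pmf (map_pmf f P). pmf (map_pmf f P) y * h y)"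
proof -
  have fm: "finite (set_pmf (map_pmf f P))" using assms by simp
  have "(\<Sum>y\<in>set_pmf (map_pmf f P). pmf (map_pmf f P) y * h y) = measure_pmf.expectation (map_pmf f P) h"
    using expect_sum[OF fm] by simp
  also have "\<dots> = measure_pmf.expectation P (\<lambda>z. h (f z))" by simp
  also have "\<dots> = (\<Sum>z\<in>set_pmf P. pmf P z * h (f z))" using expect_sum[OF assms] by simp
  finally show ?thesis by simp
qed

lemma ent_inj:
  assumes "finite (set_pmf M)" "inj_on k (set_pmf M)"
  shows "ent (map_pmf k M) = ent M"
proof -
  have "(\<Sum>y\<in>set_pmf (map_pmf k M). pmf (map_pmf k M) y * log 2 (pmf (map_pmf k M) y))
      = (\<Sum>x\<in>set_pmf M. pmf (map_pmf k M) (k x) * log 2 (pmf (map_pmf k M) (k x)))"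
    using assms by (simp add: sum.reindex)
  also have "\<dots> = (\<Sum>x\<in>set_pmf M. pmf M x * log 2 (pmf M x))"
    using assms by (intro sum.cong) (auto simp: pmf_map_inj)
  finally show ?thesis unfolding ent_def by simp
qed

lemma ent_part:
  assumes "finite (set_pmf R)"
    and "\<And>z z'. z \<in> set_pmf R \<Longrightarrow> z' \<in> set_pmf R \<Longrightarrow> f z = f z' \<longleftrightarrow> g z = g z'"
  shows "ent (map_pmf f R) = ent (map_pmf g R)"
proof -
  define k where "k = (\<lambda>y. f (inv_into (set_pmf R) g y))"
  have kz: "k (g z) = f z" if "z \<in> set_pmf R" for z
  proof -
    have "inv_into (set_pmf R) g (g z) \<in> set_pmf R" using that by (simp add: inv_into_into)
    moreover have "g (inv_into (set_pmf R) g (g z)) = g z" using that by (simp add: f_inv_into_f)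
    ultimately show ?thesis unfolding k_def using assms(2) that by blast
  qed
  have "map_pmf f R = map_pmf k (map_pmf g R)"
    by (simp add: map_pmf_comp kz cong: map_pmf_cong)
  moreover have "inj_on k (set_pmf (map_pmf g R))"
    by (auto simp: inj_on_def kz assms(2))
  ultimately show ?thesis using ent_inj[of "map_pmf g R" k] assms(1) by simp
qed

lemma mi_ent:
  assumes "finite (set_pmf P)"
  shows "mutual_info P = ent (map_pmf fst P) + ent (map_pmf snd P) - ent P"
proof -
  let ?p = "pmf P" and ?p1 = "pmf (map_pmf fst P)" and ?p2 = "pmf (map_pmf snd P)"
  have pos: "?p z > 0" "?p1 (fst z) > 0" "?p2 (snd z) > 0" if "z \<in> set_pmf P" for z
  proof -
    show "?p z > 0" using that by (simp add: pmf_positive)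
    have "fst z \<in> set_pmf (map_pmf fst P)" "snd z \<in> set_pmf (map_pmf snd P)" using that by auto
    then show "?p1 (fst z) > 0" "?p2 (snd z) > 0" by (simp_all add: pmf_positive)
  qed
  have "mutual_info P = (\<Sum>z\<in>set_pmf P. ?p z * log 2 (?p z) - ?p z * log 2 (?p1 (fst z)) - ?p z * log 2 (?p2 (snd z)))"
    unfolding mutual_info_def
  proof (intro sum.cong refl)
    fix z assume z: "z \<in> set_pmf P"
    note pz = pos[OF z]
    have "log 2 (?p z / (?p1 (fst z) * ?p2 (snd z))) = log 2 (?p z) - log 2 (?p1 (fst z)) - log 2 (?p2 (snd z))"
      using pz by (simp add: log_divide log_mult)
    then show "?p z * log 2 (?p z / (?p1 (fst z) * ?p2 (snd z))) = ?p z * log 2 (?p z) - ?p z * log 2 (?p1 (fst z)) - ?p z * log 2 (?p2 (snd z))"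
      by (simp only: right_diff_distrib)
  qed
  also have "\<dots> = (\<Sum>z\<in>set_pmf P. ?p z * log 2 (?p z)) - (\<Sum>z\<in>set_pmf P. ?p z * log 2 (?p1 (fst z))) - (\<Sum>z\<in>set_pmf P. ?p z * log 2 (?p2 (snd z)))"
    by (simp add: sum_subtractf)
  also have "(\<Sum>z\<in>set_pmf P. ?p z * log 2 (?p1 (fst z))) = - ent (map_pmf fst P)"
    unfolding ent_def using sum_map[OF assms, of "\<lambda>y. log 2 (?p1 y)" fst] by simp
  also have "(\<Sum>z\<in>set_pmf P. ?p z * log 2 (?p2 (snd z))) = - ent (map_pmf snd P)"
    unfolding ent_def using sum_map[OF assms, of "\<lambda>y. log 2 (?p2 y)" snd] by simp
  finally show ?thesis unfolding ent_def by simp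
qed


lemma marg_sum:
  assumes "finite SA" "set_pmf M \<subseteq> SA \<times> UNIV"
  shows "(\<Sum>a\<in>SA. pmf M (a,c)) = pmf (map_pmf snd M) c"
proof -
  have "pmf (map_pmf snd M) c = measure M (snd -` {c})" by (simp add: pmf_map)
  also have "\<dots> = measure M (snd -` {c} \<inter> set_pmf M)" by (simp add: measure_Int_set_pmf)
  also have "snd -` {c} \<inter> set_pmf M = (\<lambda>a. (a,c)) ` SA \<inter> set_pmf M" using assms(2) by auto
  also have "measure M \<dots> = measure M ((\<lambda>a. (a,c)) ` SA)" by (simp add: measure_Int_set_pmf)
  also have "\<dots> = sum (pmf M) ((\<lambda>a. (a,c)) ` SA)" using assms(1) by (simp add: measure_measure_pmf_finite)
  also have "\<dots> = (\<Sum>a\<in>SA. pmf M (a,c))" by (subst sum.reindex) (auto simp: inj_on_def)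
  finally show ?thesis by simp
qed

lemma log2_le: "t > 0 \<Longrightarrow> log 2 t \<le> (t - 1) / ln 2"
  unfolding log_def by (intro divide_right_mono ln_le_minus_one) auto

lemma l3:
  fixes P :: "('a \<times> 'b \<times> 'c) pmf"
  assumes fin: "finite (set_pmf P)"
  shows "ent P + ent (map_pmf (\<lambda>(a,b,c). c) P)
     \<le> ent (map_pmf (\<lambda>(a,b,c). (a,c)) P) + ent (map_pmf (\<lambda>(a,b,c). (b,c)) P)"
proof -
  define S where "S = set_pmf P"
  define fc :: "'a \<times> 'b \<times> 'c \<Rightarrow> 'c" where "fc = (\<lambda>(a,b,c). c)"
  define fac :: "'a \<times> 'b \<times> 'c \<Rightarrow> 'a \<times> 'c" where "fac = (\<lambda>(a,b,c). (a,c))"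
  define fbc :: "'a \<times> 'b \<times> 'c \<Rightarrow> 'b \<times> 'c" where "fbc = (\<lambda>(a,b,c). (b,c))"
  define C where "C = map_pmf fc P"
  define AC where "AC = map_pmf fac P"
  define BC where "BC = map_pmf fbc P"
  define q where "q = (\<lambda>z. pmf AC (fac z) * pmf BC (fbc z) / pmf C (fc z))"
  have finS: "finite S" using fin S_def by simp
  have pos: "pmf P z > 0" "pmf C (fc z) > 0" "pmf AC (fac z) > 0" "pmf BC (fbc z) > 0" if "z \<in> S" for z
  proof -
    show "pmf P z > 0" using that S_def by (simp add: pmf_positive)
    have "fc z \<in> set_pmf C" "fac z \<in> set_pmf AC" "fbc z \<in> set_pmf BC"
      using that S_def C_def AC_def BC_def by auto
    then show "pmf C (fc z) > 0" "pmf AC (fac z) > 0" "pmf BC (fbc z) > 0" by (simp_all add: pmf_positive)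
  qed
  have eC: "ent C = - (\<Sum>z\<in>S. pmf P z * log 2 (pmf C (fc z)))"
    unfolding ent_def C_def S_def using sum_map[OF fin, of "\<lambda>y. log 2 (pmf (map_pmf fc P) y)" fc] by simp
  have eAC: "ent AC = - (\<Sum>z\<in>S. pmf P z * log 2 (pmf AC (fac z)))"
    unfolding ent_def AC_def S_def using sum_map[OF fin, of "\<lambda>y. log 2 (pmf (map_pmf fac P) y)" fac] by simp
  have eBC: "ent BC = - (\<Sum>z\<in>S. pmf P z * log 2 (pmf BC (fbc z)))"
    unfolding ent_def BC_def S_def using sum_map[OF fin, of "\<lambda>y. log 2 (pmf (map_pmf fbc P) y)" fbc] by simp
  have eP: "ent P = - (\<Sum>z\<in>S. pmf P z * log 2 (pmf P z))" unfolding ent_def S_def by simp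
  have lq: "pmf P z * log 2 (q z / pmf P z) = pmf P z * log 2 (pmf AC (fac z)) + pmf P z * log 2 (pmf BC (fbc z))
       - pmf P z * log 2 (pmf C (fc z)) - pmf P z * log 2 (pmf P z)" if "z \<in> S" for z
  proof -
    note pz = pos[OF that]
    have "log 2 (q z / pmf P z) = log 2 (pmf AC (fac z)) + log 2 (pmf BC (fbc z)) - log 2 (pmf C (fc z)) - log 2 (pmf P z)"
      unfolding q_def using pz by (simp add: log_divide log_mult)
    then show ?thesis by (simp only: right_diff_distrib distrib_left)
  qed
  have qnn: "q z \<ge> 0" for z unfolding q_def by simp
  define SA where "SA = fst ` S"
  define SB where "SB = (fst \<circ> snd) ` S"
  define SC where "SC = (snd \<circ> snd) ` S"
  have fins: "finite SA" "finite SB" "finite SC" using finS SA_def SB_def SC_def by auto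
  have sub: "S \<subseteq> SA \<times> (SB \<times> SC)" unfolding SA_def SB_def SC_def by force
  have qsum: "(\<Sum>z\<in>S. q z) \<le> 1"
  proof -
    have "(\<Sum>z\<in>S. q z) \<le> (\<Sum>z\<in>SA \<times> (SB \<times> SC). q z)"
      using sub fins qnn by (intro sum_mono2) auto
    also have "\<dots> = (\<Sum>a\<in>SA. \<Sum>b\<in>SB. \<Sum>c\<in>SC. q (a,b,c))"
      by (simp add: sum.cartesian_product)
    also have "\<dots> = (\<Sum>a\<in>SA. \<Sum>c\<in>SC. \<Sum>b\<in>SB. q (a,b,c))"
      by (intro sum.cong refl sum.swap)
    also have "\<dots> = (\<Sum>c\<in>SC. \<Sum>a\<in>SA. \<Sum>b\<in>SB. q (a,b,c))"
      by (rule sum.swap)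
    also have "\<dots> = (\<Sum>c\<in>SC. (\<Sum>a\<in>SA. pmf AC (a,c)) * (\<Sum>b\<in>SB. pmf BC (b,c)) / pmf C c)"
      unfolding q_def fac_def fbc_def fc_def
      by (simp add: sum_product sum_divide_distrib)
    also have "\<dots> = (\<Sum>c\<in>SC. pmf C c)"
    proof (intro sum.cong refl)
      fix c
      have e: "(\<lambda>(a::'a,b::'b,c::'c). c) = (\<lambda>x. snd (snd x))" by auto
      have "set_pmf AC \<subseteq> SA \<times> UNIV" unfolding AC_def SA_def S_def fac_def by force
      then have 1: "(\<Sum>a\<in>SA. pmf AC (a,c)) = pmf C c"
        using marg_sum[OF fins(1), of AC c] unfolding AC_def C_def fac_def fc_def
        by (simp add: map_pmf_comp case_prod_beta e)
      have "set_pmf BC \<subseteq> SB \<times> UNIV" unfolding BC_def SB_def S_def fbc_def by force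
      then have 2: "(\<Sum>b\<in>SB. pmf BC (b,c)) = pmf C c"
        using marg_sum[OF fins(2), of BC c] unfolding BC_def C_def fbc_def fc_def
        by (simp add: map_pmf_comp case_prod_beta e)
      show "(\<Sum>a\<in>SA. pmf AC (a,c)) * (\<Sum>b\<in>SB. pmf BC (b,c)) / pmf C c = pmf C c"
        unfolding 1 2 by simp
    qed
    also have "\<dots> = 1"
    proof -
      have "SC = set_pmf C" unfolding SC_def C_def S_def fc_def by (auto simp: case_prod_beta)
      then show ?thesis using fins(3) by (simp add: sum_pmf_eq_1)
    qed
    finally show ?thesis .
  qed
  have gibbs: "(\<Sum>z\<in>S. pmf P z * log 2 (q z / pmf P z)) \<le> 0"
  proof -
    have "(\<Sum>z\<in>S. pmf P z * log 2 (q z / pmf P z)) \<le> (\<Sum>z\<in>S. pmf P z * ((q z / pmf P z - 1) / ln 2))"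
    proof (intro sum_mono mult_left_mono)
      fix z assume "z \<in> S"
      note pz = pos[OF this]
      have "q z > 0" unfolding q_def using pz by simp
      then show "log 2 (q z / pmf P z) \<le> (q z / pmf P z - 1) / ln 2" using pz by (intro log2_le) simp
    qed simp
    also have "\<dots> = (\<Sum>z\<in>S. (q z - pmf P z)) / ln 2"
    proof -
      have "(\<Sum>z\<in>S. pmf P z * ((q z / pmf P z - 1) / ln 2)) = (\<Sum>z\<in>S. (q z - pmf P z) / ln 2)"
      proof (intro sum.cong refl)
        fix z assume "z \<in> S"
        then have "pmf P z > 0" by (rule pos)
        then show "pmf P z * ((q z / pmf P z - 1) / ln 2) = (q z - pmf P z) / ln 2"
          by (simp add: field_simps)
      qed
      then show ?thesis by (simp add: sum_divide_distrib)
    qed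
    also have "\<dots> = ((\<Sum>z\<in>S. q z) - 1) / ln 2"
      using finS by (simp add: sum_subtractf S_def sum_pmf_eq_1)
    also have "\<dots> \<le> 0" using qsum by (intro divide_nonpos_pos) auto
    finally show ?thesis .
  qed
  have "(\<Sum>z\<in>S. pmf P z * log 2 (q z / pmf P z)) = ent C + ent P - ent AC - ent BC"
    unfolding eC eAC eBC eP by (simp add: lq sum.distrib sum_subtractf cong: sum.cong)
  then show ?thesis using gibbs unfolding C_def AC_def BC_def fc_def fac_def fbc_def by simp
qed


lemma l3g:
  assumes fin: "finite (set_pmf P)"
  shows "ent (map_pmf (\<lambda>z. (fa z, fb z, fc z)) P) + ent (map_pmf fc P)
     \<le> ent (map_pmf (\<lambda>z. (fa z, fc z)) P) + ent (map_pmf (\<lambda>z. (fb z, fc z)) P)"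
proof -
  have "finite (set_pmf (map_pmf (\<lambda>z. (fa z, fb z, fc z)) P))" using fin by simp
  from l3[OF this] show ?thesis by (simp add: map_pmf_comp)
qed

lemma ent_return[simp]: "ent (return_pmf x) = 0"
  by (simp add: ent_def)

lemma mi_ent2:
  assumes fin: "finite (set_pmf R)"
  shows "mutual_info (map_pmf (\<lambda>z. (f z, g z)) R) = ent (map_pmf f R) + ent (map_pmf g R) - ent (map_pmf (\<lambda>z. (f z, g z)) R)"
proof -
  have "finite (set_pmf (map_pmf (\<lambda>z. (f z, g z)) R))" using fin by simp
  from mi_ent[OF this] show ?thesis by (simp add: map_pmf_comp)
qed

lemma subadd:
  assumes fin: "finite (set_pmf P)"
  shows "ent (map_pmf (\<lambda>z. (f z, g z)) P) \<le> ent (map_pmf f P) + ent (map_pmf g P)"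
proof -
  have "ent (map_pmf (\<lambda>z. (f z, g z, ())) P) + ent (map_pmf (\<lambda>z. ()) P)
     \<le> ent (map_pmf (\<lambda>z. (f z, ())) P) + ent (map_pmf (\<lambda>z. (g z, ())) P)"
    by (rule l3g[OF fin])
  moreover have "ent (map_pmf (\<lambda>z. (f z, g z, ())) P) = ent (map_pmf (\<lambda>z. (f z, g z)) P)"
    by (rule ent_part[OF fin]) auto
  moreover have "ent (map_pmf (\<lambda>z. (f z, ())) P) = ent (map_pmf f P)"
    by (rule ent_part[OF fin]) auto
  moreover have "ent (map_pmf (\<lambda>z. (g z, ())) P) = ent (map_pmf g P)"
    by (rule ent_part[OF fin]) auto
  ultimately show ?thesis by simp
qed

lemma mi_part:
  assumes fin: "finite (set_pmf R)"
    and "\<And>z z'. z \<in> set_pmf R \<Longrightarrow> z' \<in> set_pmf R \<Longrightarrow> f1 z = f1 z' \<longleftrightarrow> g1 z = g1 z'"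
    and "\<And>z z'. z \<in> set_pmf R \<Longrightarrow> z' \<in> set_pmf R \<Longrightarrow> f2 z = f2 z' \<longleftrightarrow> g2 z = g2 z'"
  shows "mutual_info (map_pmf (\<lambda>z. (f1 z, f2 z)) R) = mutual_info (map_pmf (\<lambda>z. (g1 z, g2 z)) R)"
proof -
  have "ent (map_pmf f1 R) = ent (map_pmf g1 R)" by (rule ent_part[OF fin assms(2)])
  moreover have "ent (map_pmf f2 R) = ent (map_pmf g2 R)" by (rule ent_part[OF fin assms(3)])
  moreover have "ent (map_pmf (\<lambda>z. (f1 z, f2 z)) R) = ent (map_pmf (\<lambda>z. (g1 z, g2 z)) R)"
    by (rule ent_part[OF fin]) (use assms(2,3) in auto)
  ultimately show ?thesis by (simp add: mi_ent2[OF fin])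
qed

lemma mi_swap:
  assumes fin: "finite (set_pmf R)"
  shows "mutual_info (map_pmf (\<lambda>z. (f z, g z)) R) = mutual_info (map_pmf (\<lambda>z. (g z, f z)) R)"
proof -
  have "ent (map_pmf (\<lambda>z. (f z, g z)) R) = ent (map_pmf (\<lambda>z. (g z, f z)) R)"
    by (rule ent_part[OF fin]) auto
  then show ?thesis by (simp add: mi_ent2[OF fin])
qed

lemma dp1:
  assumes fin: "finite (set_pmf R)"
  shows "mutual_info (map_pmf (\<lambda>z. (h (f z), g z)) R) \<le> mutual_info (map_pmf (\<lambda>z. (f z, g z)) R)"
proof -
  have "ent (map_pmf (\<lambda>z. (f z, g z, h (f z))) R) + ent (map_pmf (\<lambda>z. h (f z)) R)
     \<le> ent (map_pmf (\<lambda>z. (f z, h (f z))) R) + ent (map_pmf (\<lambda>z. (g z, h (f z))) R)"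
    by (rule l3g[OF fin])
  moreover have "ent (map_pmf (\<lambda>z. (f z, g z, h (f z))) R) = ent (map_pmf (\<lambda>z. (f z, g z)) R)"
    by (rule ent_part[OF fin]) auto
  moreover have "ent (map_pmf (\<lambda>z. (f z, h (f z))) R) = ent (map_pmf f R)"
    by (rule ent_part[OF fin]) auto
  moreover have "ent (map_pmf (\<lambda>z. (g z, h (f z))) R) = ent (map_pmf (\<lambda>z. (h (f z), g z)) R)"
    by (rule ent_part[OF fin]) auto
  ultimately show ?thesis by (simp add: mi_ent2[OF fin])
qed

lemma dp:
  assumes fin: "finite (set_pmf R)"
  shows "mutual_info (map_pmf (\<lambda>z. (h (f z), k (g z))) R) \<le> mutual_info (map_pmf (\<lambda>z. (f z, g z)) R)"
proof -
  have "mutual_info (map_pmf (\<lambda>z. (h (f z), k (g z))) R) = mutual_info (map_pmf (\<lambda>z. (k (g z), h (f z))) R)"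
    by (rule mi_swap[OF fin])
  also have "\<dots> \<le> mutual_info (map_pmf (\<lambda>z. (g z, h (f z))) R)" by (rule dp1[OF fin])
  also have "\<dots> = mutual_info (map_pmf (\<lambda>z. (h (f z), g z)) R)" by (rule mi_swap[OF fin])
  also have "\<dots> \<le> mutual_info (map_pmf (\<lambda>z. (f z, g z)) R)" by (rule dp1[OF fin])
  finally show ?thesis .
qed


lemma star_sub: "RD_EGCstar_pre pX d \<subseteq> RD_EGC_pre pX d"
proof
  fix t assume "t \<in> RD_EGCstar_pre pX d"
  then obtain R1 R2 D1 D2 D12 P \<phi>1 \<phi>2 \<phi>12 where t: "t = (R1, R2, D1, D2, D12)"
    and fin: "finite (set_pmf (P :: ('a \<times> nat \<times> nat) pmf))" and mx: "map_pmf fst P = pX"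
    and r1: "R1 \<ge> mutual_info (map_pmf (\<lambda>(x,u,v). (x,u)) P)"
    and r2: "R2 \<ge> mutual_info (map_pmf (\<lambda>(x,u,v). (x,v)) P)"
    and r12: "R1 + R2 \<ge> mutual_info (map_pmf (\<lambda>(x,u,v). (x,(u,v))) P)
                 + mutual_info (map_pmf (\<lambda>(x,u,v). (u,v)) P)"
    and d1: "D1 \<ge> measure_pmf.expectation P (\<lambda>(x,u,v). d x (\<phi>1 u))"
    and d2: "D2 \<ge> measure_pmf.expectation P (\<lambda>(x,u,v). d x (\<phi>2 v))"
    and d12: "D12 \<ge> measure_pmf.expectation P (\<lambda>(x,u,v). d x (\<phi>12 u v))"
    unfolding RD_EGCstar_pre_def by blast
  define Q where "Q = map_pmf (\<lambda>(x,u,v). (x, \<phi>1 u, \<phi>2 v, \<phi>12 u v)) P"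
  have "mutual_info (map_pmf (\<lambda>z. (id (fst z), \<phi>1 (fst (snd z)))) P) \<le> mutual_info (map_pmf (\<lambda>z. (fst z, fst (snd z))) P)"
    by (rule dp[OF fin])
  then have 1: "mutual_info (map_pmf (\<lambda>(x,a,b,c). (x,a)) Q) \<le> R1"
    using r1 unfolding Q_def by (simp add: map_pmf_comp split_beta')
  have "mutual_info (map_pmf (\<lambda>z. (id (fst z), \<phi>2 (snd (snd z)))) P) \<le> mutual_info (map_pmf (\<lambda>z. (fst z, snd (snd z))) P)"
    by (rule dp[OF fin])
  then have 2: "mutual_info (map_pmf (\<lambda>(x,a,b,c). (x,b)) Q) \<le> R2"
    using r2 unfolding Q_def by (simp add: map_pmf_comp split_beta')
  have "mutual_info (map_pmf (\<lambda>z. (id (fst z), (\<lambda>(u,v). (\<phi>1 u, \<phi>2 v, \<phi>12 u v)) (snd z))) P) \<le> mutual_info (map_pmf (\<lambda>z. (fst z, snd z)) P)"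
    by (rule dp[OF fin])
  moreover have "mutual_info (map_pmf (\<lambda>z. (\<phi>1 (fst (snd z)), \<phi>2 (snd (snd z)))) P) \<le> mutual_info (map_pmf (\<lambda>z. (fst (snd z), snd (snd z))) P)"
    by (rule dp[OF fin])
  ultimately have 3: "mutual_info (map_pmf (\<lambda>(x,a,b,c). (x,(a,b,c))) Q) + mutual_info (map_pmf (\<lambda>(x,a,b,c). (a,b)) Q) \<le> R1 + R2"
    using r12 unfolding Q_def by (simp add: map_pmf_comp split_beta')
  have 4: "map_pmf fst Q = pX" using mx unfolding Q_def by (simp add: map_pmf_comp split_beta')
  have 5: "D1 \<ge> measure_pmf.expectation Q (\<lambda>(x,a,b,c). d x a)"
      "D2 \<ge> measure_pmf.expectation Q (\<lambda>(x,a,b,c). d x b)"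
      "D12 \<ge> measure_pmf.expectation Q (\<lambda>(x,a,b,c). d x c)"
    using d1 d2 d12 unfolding Q_def by (simp_all add: split_beta')
  show "t \<in> RD_EGC_pre pX d" unfolding t RD_EGC_pre_def using 1 2 3 4 5 by blast
qed



lemma ent_univ: "ent (p :: 'a::finite pmf) = - (\<Sum>x\<in>UNIV. pmf p x * log 2 (pmf p x))"
  unfolding ent_def by (subst sum.mono_neutral_left[of UNIV "set_pmf p"]) (auto simp: pmf_eq_0_set_pmf)

lemma expect_univ: "measure_pmf.expectation (p :: 'a::finite pmf) f = (\<Sum>x\<in>UNIV. pmf p x * f x)"
  by (subst integral_measure_pmf_real[where A=UNIV]) (auto simp: mult.commute)

lemma sum_map_univ:
  "(\<Sum>y\<in>UNIV. pmf (map_pmf g (S :: 'a::finite pmf)) (y :: 'b::finite) * h y) = (\<Sum>s\<in>UNIV. pmf S s * h (g s))"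
proof -
  have "(\<Sum>y\<in>UNIV. pmf (map_pmf g S) y * h y) = measure_pmf.expectation (map_pmf g S) h"
    by (simp add: expect_univ)
  also have "\<dots> = measure_pmf.expectation S (\<lambda>s. h (g s))" by simp
  finally show ?thesis by (simp add: expect_univ)
qed

lemma pmf_bindpair:
  "pmf (bind_pmf M (\<lambda>y. map_pmf (Pair y) (K y))) (y, x) = pmf M y * pmf (K y) x"
proof -
  have "pmf (bind_pmf M (\<lambda>y. map_pmf (Pair y) (K y))) (y, x)
      = measure_pmf.expectation M (\<lambda>y'. pmf (map_pmf (Pair y') (K y')) (y, x))"
    by (simp add: pmf_bind)
  also have "(\<lambda>y'. pmf (map_pmf (Pair y') (K y')) (y, x)) = (\<lambda>y'. if y' = y then pmf (K y) x else 0)"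
  proof
    fix y'
    show "pmf (map_pmf (Pair y') (K y')) (y, x) = (if y' = y then pmf (K y) x else 0)"
    proof (cases "y' = y")
      case True
      have "inj (Pair y :: 'b \<Rightarrow> 'a \<times> 'b)" by (auto simp: inj_on_def)
      from pmf_map_inj'[OF this, of "K y" x] True show ?thesis by simp
    next
      case False
      then have "(y, x) \<notin> set_pmf (map_pmf (Pair y') (K y'))" by auto
      then show ?thesis using False by (simp add: pmf_eq_0_set_pmf)
    qed
  qed
  also have "measure_pmf.expectation M (\<lambda>y'. if y' = y then pmf (K y) x else 0) = pmf (K y) x * pmf M y"
    by (subst integral_measure_pmf_real[where A="{y}"]) (auto split: if_split_asm)
  finally show ?thesis by simp
qed

lemma chain:
  fixes M :: "'a::finite pmf" and K :: "'a \<Rightarrow> 'b::finite pmf"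
  shows "ent (bind_pmf M (\<lambda>y. map_pmf (Pair y) (K y))) = ent M + (\<Sum>y\<in>UNIV. pmf M y * ent (K y))"
proof -
  let ?R = "bind_pmf M (\<lambda>y. map_pmf (Pair y) (K y))"
  have trm: "pmf M y * pmf (K y) x * log 2 (pmf M y * pmf (K y) x)
     = pmf (K y) x * (pmf M y * log 2 (pmf M y)) + pmf M y * (pmf (K y) x * log 2 (pmf (K y) x))" for y x
  proof (cases "pmf M y = 0 \<or> pmf (K y) x = 0")
    case True then show ?thesis by auto
  next
    case False
    then have "pmf M y > 0" "pmf (K y) x > 0" using pmf_nonneg[of M y] pmf_nonneg[of "K y" x] by linarith+
    then show ?thesis by (simp add: log_mult algebra_simps)
  qed
  have "ent ?R = - (\<Sum>z\<in>UNIV. pmf ?R z * log 2 (pmf ?R z))" by (rule ent_univ)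
  also have "(\<Sum>z\<in>UNIV. pmf ?R z * log 2 (pmf ?R z)) = (\<Sum>y\<in>UNIV. \<Sum>x\<in>UNIV. pmf ?R (y,x) * log 2 (pmf ?R (y,x)))"
    by (subst sum.cartesian_product) (simp add: case_prod_beta UNIV_Times_UNIV)
  also have "\<dots> = (\<Sum>y\<in>UNIV. \<Sum>x\<in>UNIV. pmf M y * pmf (K y) x * log 2 (pmf M y * pmf (K y) x))"
    by (simp add: pmf_bindpair)
  also have "\<dots> = (\<Sum>y\<in>UNIV. (\<Sum>x\<in>UNIV. pmf (K y) x) * (pmf M y * log 2 (pmf M y)) + pmf M y * (\<Sum>x\<in>UNIV. pmf (K y) x * log 2 (pmf (K y) x)))"
    by (simp add: trm sum.distrib sum_distrib_left sum_distrib_right)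
  also have "\<dots> = (\<Sum>y\<in>UNIV. pmf M y * log 2 (pmf M y)) - (\<Sum>y\<in>UNIV. pmf M y * ent (K y))"
    by (simp add: sum_pmf_eq_1 ent_univ sum_subtractf sum.distrib sum_negf)
  finally show ?thesis by (simp add: ent_univ)
qed

definition condsnd :: "('a \<times> 'b) pmf \<Rightarrow> 'a \<Rightarrow> 'b pmf" where
  "condsnd T y = (if y \<in> set_pmf (map_pmf fst T) then map_pmf snd (cond_pmf T {z. fst z = y}) else return_pmf undefined)"

lemma disint: "T = bind_pmf (map_pmf fst T) (\<lambda>y. map_pmf (Pair y) (condsnd T y))"
proof (rule pmf_eqI)
  fix z :: "'a \<times> 'b"
  obtain y x where z: "z = (y, x)" by (cases z)
  show "pmf T z = pmf (bind_pmf (map_pmf fst T) (\<lambda>y. map_pmf (Pair y) (condsnd T y))) z"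
  proof (cases "y \<in> set_pmf (map_pmf fst T)")
    case False
    then have "z \<notin> set_pmf T" using z by force
    then have h1: "pmf T (y,x) = 0" using z by (simp add: pmf_eq_0_set_pmf)
    have h2: "pmf (map_pmf fst T) y = 0" by (subst pmf_eq_0_set_pmf) (rule False)
    show ?thesis by (simp only: z pmf_bindpair h1 h2 mult_zero_left)
  next
    case True
    let ?s = "{z. fst z = y}"
    have ne: "set_pmf T \<inter> ?s \<noteq> {}" using True by auto
    have my: "measure T ?s = pmf (map_pmf fst T) y"
      by (simp add: pmf_map vimage_def)
    have pos: "pmf (map_pmf fst T) y > 0" using True by (simp add: pmf_positive)
    have "pmf (condsnd T y) x = measure (cond_pmf T ?s) (snd -` {x})"
      using True by (simp add: condsnd_def pmf_map)
    also have "\<dots> = measure (cond_pmf T ?s) (snd -` {x} \<inter> set_pmf (cond_pmf T ?s))"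
      by (simp add: measure_Int_set_pmf)
    also have "snd -` {x} \<inter> set_pmf (cond_pmf T ?s) = {(y,x)} \<inter> set_pmf (cond_pmf T ?s)"
      using ne by auto
    also have "measure (cond_pmf T ?s) \<dots> = pmf (cond_pmf T ?s) (y, x)"
      by (simp add: measure_Int_set_pmf measure_pmf_single)
    also have "\<dots> = pmf T (y,x) / pmf (map_pmf fst T) y"
      using ne by (simp add: pmf_cond my)
    finally show ?thesis using pos by (simp add: z pmf_bindpair)
  qed
qed

lemma chain_disint:
  fixes T :: "('a::finite \<times> 'b::finite) pmf"
  shows "ent T = ent (map_pmf fst T) + (\<Sum>y\<in>UNIV. pmf (map_pmf fst T) y * ent (condsnd T y))"
  by (subst disint[of T]) (rule chain)

lemma pair_alt: "pair_pmf A B = bind_pmf A (\<lambda>x. map_pmf (Pair x) B)"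
  by (simp add: pair_pmf_def map_pmf_def)

lemma ent_pair:
  fixes A :: "'a::finite pmf" and B :: "'b::finite pmf"
  shows "ent (pair_pmf A B) = ent A + ent B"
  unfolding pair_alt chain by (simp add: sum_distrib_right[symmetric] sum_pmf_eq_1)



definition TT :: "('x \<times> 'y \<times> 'y \<times> 'y) pmf \<Rightarrow> ((('y \<times> 'y) \<times> 'y) \<times> 'x) pmf" where
  "TT Q = map_pmf (\<lambda>(x,a,b,c). (((a,b),c), x)) Q"
definition Q3 :: "('x \<times> 'y \<times> 'y \<times> 'y) pmf \<Rightarrow> (('y \<times> 'y) \<times> 'y) pmf" where
  "Q3 Q = map_pmf fst (TT Q)"
definition Q2 :: "('x \<times> 'y \<times> 'y \<times> 'y) pmf \<Rightarrow> ('y \<times> 'y) pmf" where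
  "Q2 Q = map_pmf fst (Q3 Q)"
definition PiW :: "('x \<times> 'y::finite \<times> 'y \<times> 'y) pmf \<Rightarrow> (('y \<times> 'y) \<Rightarrow> 'y) pmf" where
  "PiW Q = Pi_pmf UNIV undefined (condsnd (Q3 Q))"
definition SS :: "('x \<times> 'y::finite \<times> 'y \<times> 'y) pmf \<Rightarrow> (('y \<times> 'y) \<times> (('y \<times> 'y) \<Rightarrow> 'y)) pmf" where
  "SS Q = pair_pmf (Q2 Q) (PiW Q)"
definition gg :: "(('y \<times> 'y) \<times> (('y \<times> 'y) \<Rightarrow> 'y)) \<Rightarrow> (('y \<times> 'y) \<times> 'y)" where
  "gg s = (fst s, snd s (fst s))"
definition RR :: "('x \<times> 'y::finite \<times> 'y \<times> 'y) pmf \<Rightarrow> ((('y \<times> 'y) \<times> (('y \<times> 'y) \<Rightarrow> 'y)) \<times> 'x) pmf" where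
  "RR Q = bind_pmf (SS Q) (\<lambda>s. map_pmf (Pair s) (condsnd (TT Q) (gg s)))"

lemma E0: "map_pmf gg (SS Q) = Q3 Q"
proof -
  have "map_pmf gg (SS Q) = bind_pmf (Q2 Q) (\<lambda>i. map_pmf (Pair i) (map_pmf (\<lambda>w. w i) (PiW Q)))"
    unfolding SS_def pair_alt by (simp add: map_bind_pmf map_pmf_comp gg_def)
  also have "\<dots> = bind_pmf (Q2 Q) (\<lambda>i. map_pmf (Pair i) (condsnd (Q3 Q) i))"
    unfolding PiW_def by (simp add: Pi_pmf_component)
  also have "\<dots> = Q3 Q" unfolding Q2_def by (rule disint[symmetric])
  finally show ?thesis .
qed

lemma E1: "map_pmf (\<lambda>z. (gg (fst z), snd z)) (RR Q) = TT Q"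
proof -
  have "map_pmf (\<lambda>z. (gg (fst z), snd z)) (RR Q) = bind_pmf (SS Q) (\<lambda>s. map_pmf (Pair (gg s)) (condsnd (TT Q) (gg s)))"
    unfolding RR_def by (simp add: map_bind_pmf map_pmf_comp)
  also have "\<dots> = bind_pmf (map_pmf gg (SS Q)) (\<lambda>y. map_pmf (Pair y) (condsnd (TT Q) y))"
    by (simp add: bind_map_pmf)
  also have "\<dots> = TT Q" unfolding E0 Q3_def by (rule disint[symmetric])
  finally show ?thesis .
qed

lemma E2: "map_pmf fst (RR Q) = SS Q"
  unfolding RR_def by (simp add: map_bind_pmf map_pmf_comp bind_return_pmf')

lemma ent_RR:
  fixes Q :: "('x::finite \<times> 'y::finite \<times> 'y \<times> 'y) pmf"
  shows "ent (RR Q) = ent (SS Q) + ent (TT Q) - ent (Q3 Q)"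
proof -
  have "ent (RR Q) = ent (SS Q) + (\<Sum>s\<in>UNIV. pmf (SS Q) s * ent (condsnd (TT Q) (gg s)))"
    unfolding RR_def by (rule chain)
  also have "(\<Sum>s\<in>UNIV. pmf (SS Q) s * ent (condsnd (TT Q) (gg s))) = (\<Sum>y\<in>UNIV. pmf (map_pmf gg (SS Q)) y * ent (condsnd (TT Q) y))"
    by (rule sum_map_univ[symmetric])
  also have "\<dots> = ent (TT Q) - ent (Q3 Q)"
    unfolding E0 using chain_disint[of "TT Q"] unfolding Q3_def by simp
  finally show ?thesis by simp
qed

lemma ent_SS:
  fixes Q :: "('x::finite \<times> 'y::finite \<times> 'y \<times> 'y) pmf"
  shows "ent (SS Q) = ent (Q2 Q) + ent (PiW Q)"
  unfolding SS_def by (rule ent_pair)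

lemma QR: "Q = map_pmf (\<lambda>z. (snd z, fst (fst (fst z)), snd (fst (fst z)), snd (fst z) (fst (fst z)))) (RR Q)"
proof -
  have "Q = map_pmf (\<lambda>(((a,b),c),x). (x,a,b,c)) (TT Q)" unfolding TT_def by (simp add: map_pmf_comp split_beta')
  also have "\<dots> = map_pmf (\<lambda>(((a,b),c),x). (x,a,b,c)) (map_pmf (\<lambda>z. (gg (fst z), snd z)) (RR Q))" by (simp add: E1)
  also have "\<dots> = map_pmf (\<lambda>z. (snd z, fst (fst (fst z)), snd (fst (fst z)), snd (fst z) (fst (fst z)))) (RR Q)"
    by (simp add: map_pmf_comp gg_def split_beta')
  finally show ?thesis .
qed



lemma corner:
  fixes Q :: "('x::finite \<times> 'y::finite \<times> 'y \<times> 'y) pmf" and d :: "'x \<Rightarrow> 'y \<Rightarrow> real"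
  defines "sQ \<equiv> mutual_info (map_pmf (\<lambda>(x,a,b,c). (x,(a,b,c))) Q) + mutual_info (map_pmf (\<lambda>(x,a,b,c). (a,b)) Q)"
  shows "\<exists>(P :: ('x \<times> nat \<times> nat) pmf) (\<phi>1 :: nat \<Rightarrow> 'y) (\<phi>2 :: nat \<Rightarrow> 'y) (\<phi>12 :: nat \<Rightarrow> nat \<Rightarrow> 'y).
     finite (set_pmf P) \<and> map_pmf fst P = map_pmf fst Q \<and>
     mutual_info (map_pmf (\<lambda>(x,u,v). (x,u)) P) = mutual_info (map_pmf (\<lambda>(x,a,b,c). (x,a)) Q) \<and>
     mutual_info (map_pmf (\<lambda>(x,u,v). (x,v)) P) + mutual_info (map_pmf (\<lambda>(x,a,b,c). (x,a)) Q) \<le> sQ \<and>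
     mutual_info (map_pmf (\<lambda>(x,u,v). (x,(u,v))) P) + mutual_info (map_pmf (\<lambda>(x,u,v). (u,v)) P) \<le> sQ \<and>
     measure_pmf.expectation P (\<lambda>(x,u,v). d x (\<phi>1 u)) = measure_pmf.expectation Q (\<lambda>(x,a,b,c). d x a) \<and>
     measure_pmf.expectation P (\<lambda>(x,u,v). d x (\<phi>2 v)) = measure_pmf.expectation Q (\<lambda>(x,a,b,c). d x b) \<and>
     measure_pmf.expectation P (\<lambda>(x,u,v). d x (\<phi>12 u v)) = measure_pmf.expectation Q (\<lambda>(x,a,b,c). d x c)"
proof -
  define R where "R = RR Q"
  have fin: "finite (set_pmf R)" by simp
  define fX where "fX = (\<lambda>z::((('y \<times> 'y) \<times> (('y \<times> 'y) \<Rightarrow> 'y)) \<times> 'x). snd z)"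
  define fA where "fA = (\<lambda>z::((('y \<times> 'y) \<times> (('y \<times> 'y) \<Rightarrow> 'y)) \<times> 'x). fst (fst (fst z)))"
  define fB where "fB = (\<lambda>z::((('y \<times> 'y) \<times> (('y \<times> 'y) \<Rightarrow> 'y)) \<times> 'x). snd (fst (fst z)))"
  define fW where "fW = (\<lambda>z::((('y \<times> 'y) \<times> (('y \<times> 'y) \<Rightarrow> 'y)) \<times> 'x). snd (fst z))"
  define fC where "fC = (\<lambda>z::((('y \<times> 'y) \<times> (('y \<times> 'y) \<Rightarrow> 'y)) \<times> 'x). snd (fst z) (fst (fst z)))"
  note fdefs = fX_def fA_def fB_def fW_def fC_def
  have QR': "Q = map_pmf (\<lambda>z. (fX z, fA z, fB z, fC z)) R"
    unfolding R_def fdefs by (rule QR)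
  define P where "P = map_pmf (\<lambda>z. (fX z, to_nat (fA z), to_nat (fB z, fW z))) R"
  define \<phi>1 :: "nat \<Rightarrow> 'y" where "\<phi>1 = (\<lambda>n. from_nat n)"
  define \<phi>2 :: "nat \<Rightarrow> 'y" where "\<phi>2 = (\<lambda>n. fst (from_nat n :: 'y \<times> (('y \<times> 'y) \<Rightarrow> 'y)))"
  define \<phi>12 :: "nat \<Rightarrow> nat \<Rightarrow> 'y" where
    "\<phi>12 = (\<lambda>u v. snd (from_nat v :: 'y \<times> (('y \<times> 'y) \<Rightarrow> 'y)) (from_nat u, fst (from_nat v :: 'y \<times> (('y \<times> 'y) \<Rightarrow> 'y))))"
  have mQA: "mutual_info (map_pmf (\<lambda>(x,a,b,c). (x,a)) Q) = mutual_info (map_pmf (\<lambda>z. (fX z, fA z)) R)"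
    unfolding QR' by (simp add: map_pmf_comp)
  have mQABC: "mutual_info (map_pmf (\<lambda>(x,a,b,c). (x,(a,b,c))) Q) = mutual_info (map_pmf (\<lambda>z. (fX z, (fA z, fB z, fC z))) R)"
    unfolding QR' by (simp add: map_pmf_comp)
  have mQAB: "mutual_info (map_pmf (\<lambda>(x,a,b,c). (a,b)) Q) = mutual_info (map_pmf (\<lambda>z. (fA z, fB z)) R)"
    unfolding QR' by (simp add: map_pmf_comp)
  have mPU: "mutual_info (map_pmf (\<lambda>(x,u,v). (x,u)) P) = mutual_info (map_pmf (\<lambda>z. (fX z, fA z)) R)"
    unfolding P_def by (simp add: map_pmf_comp) (rule mi_part[OF fin], auto)
  have mPV: "mutual_info (map_pmf (\<lambda>(x,u,v). (x,v)) P) = mutual_info (map_pmf (\<lambda>z. (fX z, (fB z, fW z))) R)"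
    unfolding P_def by (simp add: map_pmf_comp) (rule mi_part[OF fin], auto)
  have mPUV: "mutual_info (map_pmf (\<lambda>(x,u,v). (x,(u,v))) P) = mutual_info (map_pmf (\<lambda>z. (fX z, fst z)) R)"
    unfolding P_def by (simp add: map_pmf_comp) (rule mi_part[OF fin], auto simp: fdefs prod_eq_iff)
  have mPUV2: "mutual_info (map_pmf (\<lambda>(x,u,v). (u,v)) P) = mutual_info (map_pmf (\<lambda>z. (fA z, (fB z, fW z))) R)"
    unfolding P_def by (simp add: map_pmf_comp) (rule mi_part[OF fin], auto)
  have eS: "ent (map_pmf fst R) = ent (SS Q)" unfolding R_def E2 ..
  have eR: "ent (map_pmf (\<lambda>z. (fX z, fst z)) R) = ent R"
  proof -
    have "ent (map_pmf (\<lambda>z. (fX z, fst z)) R) = ent (map_pmf (\<lambda>z. z) R)"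
      by (rule ent_part[OF fin]) (auto simp: fdefs prod_eq_iff)
    then show ?thesis by simp
  qed
  have eAB: "ent (map_pmf (\<lambda>z. (fA z, (fB z, fW z))) R) = ent (SS Q)"
  proof -
    have "ent (map_pmf (\<lambda>z. (fA z, (fB z, fW z))) R) = ent (map_pmf fst R)"
      by (rule ent_part[OF fin]) (auto simp: fdefs prod_eq_iff)
    then show ?thesis using eS by simp
  qed
  have e3: "ent (map_pmf (\<lambda>z. (fA z, fB z, fC z)) R) = ent (Q3 Q)"
  proof -
    have "Q3 Q = map_pmf (\<lambda>z. gg (fst z)) R" unfolding Q3_def R_def E1[symmetric] by (simp add: map_pmf_comp)
    then have "ent (Q3 Q) = ent (map_pmf (\<lambda>z. gg (fst z)) R)" by simp
    also have "\<dots> = ent (map_pmf (\<lambda>z. (fA z, fB z, fC z)) R)"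
      by (rule ent_part[OF fin]) (auto simp: fdefs gg_def prod_eq_iff)
    finally show ?thesis by simp
  qed
  have eT: "ent (map_pmf (\<lambda>z. (fX z, (fA z, fB z, fC z))) R) = ent (TT Q)"
  proof -
    have "ent (TT Q) = ent (map_pmf (\<lambda>z. (gg (fst z), snd z)) R)" unfolding R_def E1 ..
    also have "\<dots> = ent (map_pmf (\<lambda>z. (fX z, (fA z, fB z, fC z))) R)"
      by (rule ent_part[OF fin]) (auto simp: fdefs gg_def prod_eq_iff)
    finally show ?thesis by simp
  qed
  have e2: "ent (map_pmf (\<lambda>z. (fA z, fB z)) R) = ent (Q2 Q)"
  proof -
    have "Q2 Q = map_pmf (\<lambda>z. fst (fst z)) R" unfolding Q2_def E0[symmetric] R_def E2[symmetric]
      by (simp add: map_pmf_comp gg_def)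
    then have "ent (Q2 Q) = ent (map_pmf (\<lambda>z. fst (fst z)) R)" by simp
    also have "\<dots> = ent (map_pmf (\<lambda>z. (fA z, fB z)) R)"
      by (rule ent_part[OF fin]) (auto simp: fdefs prod_eq_iff)
    finally show ?thesis by simp
  qed
  have eW: "ent (map_pmf fW R) = ent (PiW Q)"
  proof -
    have "map_pmf fW R = map_pmf snd (map_pmf fst R)" unfolding fW_def by (simp add: map_pmf_comp)
    also have "\<dots> = PiW Q" unfolding R_def E2 SS_def by (rule map_snd_pair_pmf)
    finally show ?thesis by simp
  qed
  have entR: "ent R = ent (Q2 Q) + ent (PiW Q) + ent (TT Q) - ent (Q3 Q)"
    unfolding R_def ent_RR ent_SS by simp
  have sub: "ent (map_pmf (\<lambda>z. (fB z, fW z)) R) \<le> ent (map_pmf fB R) + ent (map_pmf fW R)"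
    by (rule subadd[OF fin])
  have l3i: "ent (map_pmf (\<lambda>z. (fA z, (fB z, fW z), fX z)) R) + ent (map_pmf fX R)
      \<le> ent (map_pmf (\<lambda>z. (fA z, fX z)) R) + ent (map_pmf (\<lambda>z. ((fB z, fW z), fX z)) R)"
    by (rule l3g[OF fin])
  have l3a: "ent (map_pmf (\<lambda>z. (fA z, (fB z, fW z), fX z)) R) = ent R"
  proof -
    have "ent (map_pmf (\<lambda>z. (fA z, (fB z, fW z), fX z)) R) = ent (map_pmf (\<lambda>z. z) R)"
      by (rule ent_part[OF fin]) (auto simp: fdefs prod_eq_iff)
    then show ?thesis by simp
  qed
  have l3b: "ent (map_pmf (\<lambda>z. (fA z, fX z)) R) = ent (map_pmf (\<lambda>z. (fX z, fA z)) R)"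
    by (rule ent_part[OF fin]) auto
  have l3c: "ent (map_pmf (\<lambda>z. ((fB z, fW z), fX z)) R) = ent (map_pmf (\<lambda>z. (fX z, (fB z, fW z))) R)"
    by (rule ent_part[OF fin]) auto
  have sQ': "sQ = ent (map_pmf fX R) + ent (Q3 Q) - ent (TT Q) + ent (map_pmf fA R) + ent (map_pmf fB R) - ent (Q2 Q)"
    unfolding sQ_def mQABC mQAB mi_ent2[OF fin] e3 eT e2 by simp
  have c1: "mutual_info (map_pmf (\<lambda>(x,u,v). (x,(u,v))) P) + mutual_info (map_pmf (\<lambda>(x,u,v). (u,v)) P) \<le> sQ"
    unfolding mPUV mPUV2 mi_ent2[OF fin] eR eAB eS sQ' using entR sub eW
    by (simp add: ent_SS)
  have c2: "mutual_info (map_pmf (\<lambda>(x,u,v). (x,v)) P) + mutual_info (map_pmf (\<lambda>(x,a,b,c). (x,a)) Q) \<le> sQ"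
    using c1 l3i unfolding mPUV mPUV2 mPV mQA mi_ent2[OF fin] eR eAB eS l3a l3b l3c by simp
  have c0: "map_pmf fst P = map_pmf fst Q" unfolding P_def QR' by (simp add: map_pmf_comp)
  have c3: "measure_pmf.expectation P (\<lambda>(x,u,v). d x (\<phi>1 u)) = measure_pmf.expectation Q (\<lambda>(x,a,b,c). d x a)"
    "measure_pmf.expectation P (\<lambda>(x,u,v). d x (\<phi>2 v)) = measure_pmf.expectation Q (\<lambda>(x,a,b,c). d x b)"
    "measure_pmf.expectation P (\<lambda>(x,u,v). d x (\<phi>12 u v)) = measure_pmf.expectation Q (\<lambda>(x,a,b,c). d x c)"
    unfolding P_def QR' \<phi>1_def \<phi>2_def \<phi>12_def by (simp_all add: fdefs)
  have c4: "finite (set_pmf P)" unfolding P_def by simp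
  show ?thesis
    apply (rule exI[of _ P], rule exI[of _ \<phi>1], rule exI[of _ \<phi>2], rule exI[of _ \<phi>12])
    using c0 c1 c2 c3 c4 mPU mQA by simp
qed



lemma swap_star:
  assumes "(R1, R2, D1, D2, D12) \<in> RD_EGCstar_pre pX d"
  shows "(R2, R1, D2, D1, D12) \<in> RD_EGCstar_pre pX d"
proof -
  obtain P \<phi>1 \<phi>2 \<phi>12 where
    fin: "finite (set_pmf (P :: ('a \<times> nat \<times> nat) pmf))" and mx: "map_pmf fst P = pX"
    and r1: "R1 \<ge> mutual_info (map_pmf (\<lambda>(x,u,v). (x,u)) P)"
    and r2: "R2 \<ge> mutual_info (map_pmf (\<lambda>(x,u,v). (x,v)) P)"
    and r12: "R1 + R2 \<ge> mutual_info (map_pmf (\<lambda>(x,u,v). (x,(u,v))) P)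
                 + mutual_info (map_pmf (\<lambda>(x,u,v). (u,v)) P)"
    and d1: "D1 \<ge> measure_pmf.expectation P (\<lambda>(x,u,v). d x (\<phi>1 u))"
    and d2: "D2 \<ge> measure_pmf.expectation P (\<lambda>(x,u,v). d x (\<phi>2 v))"
    and d12: "D12 \<ge> measure_pmf.expectation P (\<lambda>(x,u,v). d x (\<phi>12 u v))"
    using assms unfolding RD_EGCstar_pre_def by blast
  define P' where "P' = map_pmf (\<lambda>(x,u,v). (x,v,u)) P"
  have a1: "mutual_info (map_pmf (\<lambda>(x,u,v). (x,u)) P') = mutual_info (map_pmf (\<lambda>(x,u,v). (x,v)) P)"
    "mutual_info (map_pmf (\<lambda>(x,u,v). (x,v)) P') = mutual_info (map_pmf (\<lambda>(x,u,v). (x,u)) P)"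
    unfolding P'_def by (simp_all add: map_pmf_comp split_beta')
  have "mutual_info (map_pmf (\<lambda>z. (fst z, (snd (snd z), fst (snd z)))) P) = mutual_info (map_pmf (\<lambda>z. (fst z, (fst (snd z), snd (snd z)))) P)"
    by (rule mi_part[OF fin]) auto
  then have a2: "mutual_info (map_pmf (\<lambda>(x,u,v). (x,(u,v))) P') = mutual_info (map_pmf (\<lambda>(x,u,v). (x,(u,v))) P)"
    unfolding P'_def by (simp add: map_pmf_comp split_beta')
  have "mutual_info (map_pmf (\<lambda>z. (snd (snd z), fst (snd z))) P) = mutual_info (map_pmf (\<lambda>z. (fst (snd z), snd (snd z))) P)"
    by (rule mi_swap[OF fin])
  then have a3: "mutual_info (map_pmf (\<lambda>(x,u,v). (u,v)) P') = mutual_info (map_pmf (\<lambda>(x,u,v). (u,v)) P)"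
    unfolding P'_def by (simp add: map_pmf_comp split_beta')
  have a4: "finite (set_pmf P')" "map_pmf fst P' = pX" using fin mx unfolding P'_def by (simp_all add: map_pmf_comp split_beta')
  have a5: "D2 \<ge> measure_pmf.expectation P' (\<lambda>(x,u,v). d x (\<phi>2 u))"
    "D1 \<ge> measure_pmf.expectation P' (\<lambda>(x,u,v). d x (\<phi>1 v))"
    "D12 \<ge> measure_pmf.expectation P' (\<lambda>(x,u,v). d x ((\<lambda>u v. \<phi>12 v u) u v))"
    using d1 d2 d12 unfolding P'_def by (simp_all add: split_beta')
  show ?thesis unfolding RD_EGCstar_pre_def
    using a1 a2 a3 a4 a5 r1 r2 r12 by (auto intro!: exI[of _ P'])
qed

lemma starI:
  assumes "finite (set_pmf (P :: ('a \<times> nat \<times> nat) pmf))" "map_pmf fst P = pX"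
    "R1 \<ge> mutual_info (map_pmf (\<lambda>(x,u,v). (x,u)) P)"
    "R2 \<ge> mutual_info (map_pmf (\<lambda>(x,u,v). (x,v)) P)"
    "R1 + R2 \<ge> mutual_info (map_pmf (\<lambda>(x,u,v). (x,(u,v))) P)
                 + mutual_info (map_pmf (\<lambda>(x,u,v). (u,v)) P)"
    "D1 \<ge> measure_pmf.expectation P (\<lambda>(x,u,v). d x (fa u))"
    "D2 \<ge> measure_pmf.expectation P (\<lambda>(x,u,v). d x (fb v))"
    "D12 \<ge> measure_pmf.expectation P (\<lambda>(x,u,v). d x (fc u v))"
  shows "(R1, R2, D1, D2, D12) \<in> RD_EGCstar_pre pX d"
  unfolding RD_EGCstar_pre_def using assms by blast

lemma pre_sub:
  fixes pX :: "'x::finite pmf" and d :: "'x \<Rightarrow> 'y::finite \<Rightarrow> real"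
  shows "RD_EGC_pre pX d \<subseteq> convex hull (RD_EGCstar_pre pX d)"
proof
  fix t assume "t \<in> RD_EGC_pre pX d"
  then obtain R1 R2 D1 D2 D12 Q where t: "t = (R1, R2, D1, D2, D12)"
    and mx: "map_pmf fst (Q :: ('x \<times> 'y \<times> 'y \<times> 'y) pmf) = pX"
    and r1: "R1 \<ge> mutual_info (map_pmf (\<lambda>(x,a,b,c). (x,a)) Q)"
    and r2: "R2 \<ge> mutual_info (map_pmf (\<lambda>(x,a,b,c). (x,b)) Q)"
    and r12: "R1 + R2 \<ge> mutual_info (map_pmf (\<lambda>(x,a,b,c). (x,(a,b,c))) Q)
                 + mutual_info (map_pmf (\<lambda>(x,a,b,c). (a,b)) Q)"
    and d1: "D1 \<ge> measure_pmf.expectation Q (\<lambda>(x,a,b,c). d x a)"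
    and d2: "D2 \<ge> measure_pmf.expectation Q (\<lambda>(x,a,b,c). d x b)"
    and d12: "D12 \<ge> measure_pmf.expectation Q (\<lambda>(x,a,b,c). d x c)"
    unfolding RD_EGC_pre_def by blast
  define a where "a = mutual_info (map_pmf (\<lambda>(x,a,b,c). (x,a)) Q)"
  define b where "b = mutual_info (map_pmf (\<lambda>(x,a,b,c). (x,b)) Q)"
  define s where "s = mutual_info (map_pmf (\<lambda>(x,a,b,c). (x,(a,b,c))) Q) + mutual_info (map_pmf (\<lambda>(x,a,b,c). (a,b)) Q)"
  have finQ: "finite (set_pmf Q)" by simp
  have inA: "(r, u, D1, D2, D12) \<in> RD_EGCstar_pre pX d" if "r \<ge> a" "u \<ge> s - a" for r u
  proof -
    obtain P \<phi>1 \<phi>2 \<phi>12 where "finite (set_pmf (P :: ('x \<times> nat \<times> nat) pmf)) \<and> map_pmf fst P = map_pmf fst Q \<and>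
     mutual_info (map_pmf (\<lambda>(x,u,v). (x,u)) P) = a \<and>
     mutual_info (map_pmf (\<lambda>(x,u,v). (x,v)) P) + a \<le> s \<and>
     mutual_info (map_pmf (\<lambda>(x,u,v). (x,(u,v))) P) + mutual_info (map_pmf (\<lambda>(x,u,v). (u,v)) P) \<le> s \<and>
     measure_pmf.expectation P (\<lambda>(x,u,v). d x (\<phi>1 u)) = measure_pmf.expectation Q (\<lambda>(x,a,b,c). d x a) \<and>
     measure_pmf.expectation P (\<lambda>(x,u,v). d x (\<phi>2 v)) = measure_pmf.expectation Q (\<lambda>(x,a,b,c). d x b) \<and>
     measure_pmf.expectation P (\<lambda>(x,u,v). d x (\<phi>12 u v)) = measure_pmf.expectation Q (\<lambda>(x,a,b,c). d x c)"
      using corner[of Q d] unfolding a_def s_def by blast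
    then show ?thesis using that mx d1 d2 d12
      by (intro starI[where P=P and fa=\<phi>1 and fb=\<phi>2 and fc=\<phi>12]) auto
  qed
  have inB: "(r, u, D1, D2, D12) \<in> RD_EGCstar_pre pX d" if "r \<ge> s - b" "u \<ge> b" for r u
  proof -
    define Q' where "Q' = map_pmf (\<lambda>(x,a,b,c). (x,b,a,c)) Q"
    have q1: "mutual_info (map_pmf (\<lambda>(x,a,b,c). (x,a)) Q') = b" unfolding Q'_def b_def
      by (simp add: map_pmf_comp split_beta')
    have "mutual_info (map_pmf (\<lambda>z. (fst z, (fst (snd (snd z)), fst (snd z), snd (snd (snd z))))) Q)
        = mutual_info (map_pmf (\<lambda>z. (fst z, (fst (snd z), fst (snd (snd z)), snd (snd (snd z))))) Q)"
      by (rule mi_part[OF finQ]) auto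
    moreover have "mutual_info (map_pmf (\<lambda>z. (fst (snd (snd z)), fst (snd z))) Q)
        = mutual_info (map_pmf (\<lambda>z. (fst (snd z), fst (snd (snd z)))) Q)"
      by (rule mi_swap[OF finQ])
    ultimately have q2: "mutual_info (map_pmf (\<lambda>(x,a,b,c). (x,(a,b,c))) Q') + mutual_info (map_pmf (\<lambda>(x,a,b,c). (a,b)) Q') = s"
      unfolding Q'_def s_def by (simp add: map_pmf_comp split_beta')
    obtain P \<phi>1 \<phi>2 \<phi>12 where "finite (set_pmf (P :: ('x \<times> nat \<times> nat) pmf)) \<and> map_pmf fst P = map_pmf fst Q' \<and>
     mutual_info (map_pmf (\<lambda>(x,u,v). (x,u)) P) = b \<and>
     mutual_info (map_pmf (\<lambda>(x,u,v). (x,v)) P) + b \<le> s \<and>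
     mutual_info (map_pmf (\<lambda>(x,u,v). (x,(u,v))) P) + mutual_info (map_pmf (\<lambda>(x,u,v). (u,v)) P) \<le> s \<and>
     measure_pmf.expectation P (\<lambda>(x,u,v). d x (\<phi>1 u)) = measure_pmf.expectation Q' (\<lambda>(x,a,b,c). d x a) \<and>
     measure_pmf.expectation P (\<lambda>(x,u,v). d x (\<phi>2 v)) = measure_pmf.expectation Q' (\<lambda>(x,a,b,c). d x b) \<and>
     measure_pmf.expectation P (\<lambda>(x,u,v). d x (\<phi>12 u v)) = measure_pmf.expectation Q' (\<lambda>(x,a,b,c). d x c)"
      using corner[of Q' d] unfolding q1 q2 by blast
    moreover have "map_pmf fst Q' = pX" "measure_pmf.expectation Q' (\<lambda>(x,a,b,c). d x a) = measure_pmf.expectation Q (\<lambda>(x,a,b,c). d x b)"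
      "measure_pmf.expectation Q' (\<lambda>(x,a,b,c). d x b) = measure_pmf.expectation Q (\<lambda>(x,a,b,c). d x a)"
      "measure_pmf.expectation Q' (\<lambda>(x,a,b,c). d x c) = measure_pmf.expectation Q (\<lambda>(x,a,b,c). d x c)"
      unfolding Q'_def using mx by (simp_all add: map_pmf_comp split_beta')
    ultimately have "(u, r, D2, D1, D12) \<in> RD_EGCstar_pre pX d" using that d1 d2 d12
      by (intro starI[where P=P and fa=\<phi>1 and fb=\<phi>2 and fc=\<phi>12]) auto
    then show ?thesis by (rule swap_star)
  qed
  have ra: "R1 \<ge> a" "R2 \<ge> b" "R1 + R2 \<ge> s" using r1 r2 r12 unfolding a_def b_def s_def by auto
  show "t \<in> convex hull (RD_EGCstar_pre pX d)"
  proof (cases "R2 \<ge> s - a")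
    case True
    then show ?thesis unfolding t using inA ra by (intro hull_inc) auto
  next
    case nA: False
    show ?thesis
    proof (cases "R1 \<ge> s - b")
      case True
      then show ?thesis unfolding t using inB ra by (intro hull_inc) auto
    next
      case nB: False
      define T where "T = R1 + R2"
      define l where "l = (R2 - b) / (T - a - b)"
      have den: "T - a - b > 0" using nA nB ra unfolding T_def by linarith
      have l01: "0 \<le> l" "l \<le> 1" unfolding l_def using den ra T_def by (auto simp: field_simps)
      have pA: "(a, T - a, D1, D2, D12) \<in> convex hull (RD_EGCstar_pre pX d)"
        using inA ra T_def by (intro hull_inc) auto
      have pB: "(T - b, b, D1, D2, D12) \<in> convex hull (RD_EGCstar_pre pX d)"
        using inB ra T_def by (intro hull_inc) auto
      have "l *\<^sub>R (a, T - a, D1, D2, D12) + (1 - l) *\<^sub>R (T - b, b, D1, D2, D12) \<in> convex hull (RD_EGCstar_pre pX d)"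
        using convexD[OF convex_convex_hull pA pB, of l "1 - l"] l01 by simp
      moreover have "l *\<^sub>R (a, T - a, D1, D2, D12) + (1 - l) *\<^sub>R (T - b, b, D1, D2, D12) = (R1, R2, D1, D2, D12)"
      proof -
        have lk: "l * (T - a - b) = R2 - b" unfolding l_def using den by simp
        have "l * a + (1 - l) * (T - b) = (T - b) - l * (T - a - b)" by (simp add: algebra_simps)
        then have 1: "l * a + (1 - l) * (T - b) = R1" using lk unfolding T_def by simp
        have "l * (T - a) + (1 - l) * b = b + l * (T - a - b)" by (simp add: algebra_simps)
        then have 2: "l * (T - a) + (1 - l) * b = R2" using lk by simp
        note 1 2
        moreover have "l * D + (1 - l) * D = D" for D by (simp add: algebra_simps)
        ultimately show ?thesis by simp
      qed
      ultimately show ?thesis unfolding t by simp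
    qed
  qed
qed

theorem theorem1:
  fixes pX :: "'x::finite pmf" and d :: "'x \<Rightarrow> 'y::finite \<Rightarrow> real"
  assumes "\<forall>x y. d x y \<ge> 0"
  shows "RD_EGCstar pX d = RD_EGC pX d"
proof -
  have "convex hull (RD_EGCstar_pre pX d) \<subseteq> convex hull (RD_EGC_pre pX d)"
    by (rule hull_mono[OF star_sub])
  moreover have "convex hull (RD_EGC_pre pX d) \<subseteq> convex hull (RD_EGCstar_pre pX d)"
    by (rule hull_minimal) (rule pre_sub, rule convex_convex_hull)
  ultimately have "convex hull (RD_EGCstar_pre pX d) = convex hull (RD_EGC_pre pX d)" by blast
  then show ?thesis unfolding RD_EGCstar_def RD_EGC_def convex_closure_def by simp
qed


end
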